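(* Let $k\ge1$ and let $\lambda_{opt}=\min_{C}\max_{1\le i\le n}\min_{c\in C}\mathsf{E}\mathrm{d}(c,P_i)$, the minimum taken over all sets $C$ of $k$ points of $T$. Then either $\lambda_{opt}=\mathsf{E}\mathrm{d}(p_i^*,P_i)$ for some $i$, or there exist indices $i,j$ and a point $c_{ij}$ on the path $\pi(p_i^*,p_j^* )$ with $\mathsf{E}\mathrm{d}(c_{ij},P_i)=\mathsf{E}\mathrm{d}(c_{ij},P_j)$ such that $\lambda_{opt}=\mathsf{E}\mathrm{d}(c_{ij},P_i)=\mathsf{E}\mathrm{d}(c_{ij},P_j)$.
   Context: $T$ is a tree with positive edge lengths, edges regarded as segments; $\pi(p,q)$ is the simple path between points $p,q$ and $d$ the path-length distance. Uncertain point $P_i$ ($1\le i\le n$) has weight $w_i\ge0$, locations $p_{ij}$ and probabilities $f_{ij}\ge0$ summing to $1$; $\mathsf{E}\mathrm{d}(x,P_i)=w_i\sum_j f_{ij}d(x,p_{ij})$. $p_i^*$ is a vertex of $T$ minimizing $\mathsf{E}\mathrm{d}(\cdot,P_i)$ over $T$ (the median of $P_i$). As $x$ moves along $\pi(p_i^*,p_j^* )$ from $p_i^*$ to $p_j^*$, $\mathsf{E}\mathrm{d}(x,P_i)$ is nondecreasing and $\mathsf{E}\mathrm{d}(x,P_j)$ is nonincreasing. *)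

theory Defs
  imports Complex_Main
begin

definition walk :: "'v set set \<Rightarrow> 'v list \<Rightarrow> bool" where
  "walk E xs \<longleftrightarrow> xs \<noteq> [] \<and> (\<forall>i < length xs - 1. {xs ! i, xs ! Suc i} \<in> E)"

definition is_cycle :: "'v set set \<Rightarrow> 'v list \<Rightarrow> bool" where
  "is_cycle E xs \<longleftrightarrow> walk E xs \<and> distinct xs \<and> length xs \<ge> 3 \<and> {last xs, hd xs} \<in> E"

definition is_tree :: "'v set \<Rightarrow> 'v set set \<Rightarrow> ('v set \<Rightarrow> real) \<Rightarrow> bool" where
  "is_tree V E len \<longleftrightarrow> finite V \<and> V \<noteq> {}
     \<and> (\<forall>e\<in>E. \<exists>u v. e = {u, v} \<and> u \<in> V \<and> v \<in> V \<and> u \<noteq> v)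
     \<and> (\<forall>e\<in>E. len e > 0)
     \<and> (\<forall>u\<in>V. \<forall>v\<in>V. \<exists>xs. walk E xs \<and> hd xs = u \<and> last xs = v)
     \<and> (\<nexists>xs. is_cycle E xs)"

definition walk_len :: "('v set \<Rightarrow> real) \<Rightarrow> 'v list \<Rightarrow> real" where
  "walk_len len xs = (\<Sum>i < length xs - 1. len {xs ! i, xs ! Suc i})"

text \<open>Path-length distance between vertices (length of the shortest walk,
which in a tree is the length of the unique simple path).\<close>
definition dV :: "'v set set \<Rightarrow> ('v set \<Rightarrow> real) \<Rightarrow> 'v \<Rightarrow> 'v \<Rightarrow> real" where
  "dV E len a b = Inf {walk_len len xs | xs. walk E xs \<and> hd xs = a \<and> last xs = b}"

text \<open>Points of T: a triple (u, v, t) with {u,v} an edge and 0 <= t <= len {u,v}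
denotes the point of the edge segment uv at distance t from u; the triple
(u, u, 0) with u a vertex denotes the vertex u itself.\<close>
type_synonym 'v point = "'v \<times> 'v \<times> real"

definition vpt :: "'v \<Rightarrow> 'v point" where
  "vpt u = (u, u, 0)"

definition pts :: "'v set \<Rightarrow> 'v set set \<Rightarrow> ('v set \<Rightarrow> real) \<Rightarrow> 'v point set" where
  "pts V E len = {(u, v, t). {u, v} \<in> E \<and> 0 \<le> t \<and> t \<le> len {u, v}} \<union> vpt ` V"

definition seglen :: "('v set \<Rightarrow> real) \<Rightarrow> 'v point \<Rightarrow> real" where
  "seglen len p = (case p of (u, v, t) \<Rightarrow> if u = v then 0 else len {u, v})"

definition dPV :: "'v set set \<Rightarrow> ('v set \<Rightarrow> real) \<Rightarrow> 'v point \<Rightarrow> 'v \<Rightarrow> real" where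
  "dPV E len p a = (case p of (u, v, t) \<Rightarrow>
      min (t + dV E len u a) (seglen len p - t + dV E len v a))"

definition dist_T :: "'v set set \<Rightarrow> ('v set \<Rightarrow> real) \<Rightarrow> 'v point \<Rightarrow> 'v point \<Rightarrow> real" where
  "dist_T E len p q = (case p of (u, v, t) \<Rightarrow> case q of (u', v', t') \<Rightarrow>
      (let via = min (t + dPV E len q u) (seglen len p - t + dPV E len q v) in
       if u \<noteq> v \<and> {u, v} = {u', v'}
       then min via (if u = u' then \<bar>t - t'\<bar> else \<bar>t - (seglen len p - t')\<bar>)
       else via))"

text \<open>A point c lies on the simple path pi(p,q): in a tree this is exactly
d(p,c) + d(c,q) = d(p,q).\<close>
definition on_path :: "'v set set \<Rightarrow> ('v set \<Rightarrow> real) \<Rightarrow> 'v point \<Rightarrow> 'v point \<Rightarrow> 'v point \<Rightarrow> bool" where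
  "on_path E len p q c \<longleftrightarrow> dist_T E len p c + dist_T E len c q = dist_T E len p q"

text \<open>Uncertain point P_i: weight w i, m i locations loc i j (j < m i) with
probabilities f i j.\<close>
definition Ed :: "'v set set \<Rightarrow> ('v set \<Rightarrow> real) \<Rightarrow> (nat \<Rightarrow> real) \<Rightarrow> (nat \<Rightarrow> nat)
   \<Rightarrow> (nat \<Rightarrow> nat \<Rightarrow> 'v point) \<Rightarrow> (nat \<Rightarrow> nat \<Rightarrow> real) \<Rightarrow> 'v point \<Rightarrow> nat \<Rightarrow> real" where
  "Ed E len w m loc f x i = w i * (\<Sum>j < m i. f i j * dist_T E len x (loc i j))"

text \<open>The k-center objective and its optimum (over all sets of at most k points;
for a tree with at least one edge this equals the minimum over sets of exactly k points).\<close>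
definition kcost :: "'v set set \<Rightarrow> ('v set \<Rightarrow> real) \<Rightarrow> nat \<Rightarrow> (nat \<Rightarrow> real) \<Rightarrow> (nat \<Rightarrow> nat)
   \<Rightarrow> (nat \<Rightarrow> nat \<Rightarrow> 'v point) \<Rightarrow> (nat \<Rightarrow> nat \<Rightarrow> real) \<Rightarrow> 'v point set \<Rightarrow> real" where
  "kcost E len n w m loc f C = Max ((\<lambda>i. Min ((\<lambda>c. Ed E len w m loc f c i) ` C)) ` {1..n})"

definition lambda_opt :: "'v set \<Rightarrow> 'v set set \<Rightarrow> ('v set \<Rightarrow> real) \<Rightarrow> nat \<Rightarrow> nat \<Rightarrow> (nat \<Rightarrow> real)
   \<Rightarrow> (nat \<Rightarrow> nat) \<Rightarrow> (nat \<Rightarrow> nat \<Rightarrow> 'v point) \<Rightarrow> (nat \<Rightarrow> nat \<Rightarrow> real) \<Rightarrow> real" where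
  "lambda_opt V E len k n w m loc f =
     Inf (kcost E len n w m loc f ` {C. C \<subseteq> pts V E len \<and> C \<noteq> {} \<and> finite C \<and> card C \<le> k})"

end

theory Submission
  imports Defs
begin


fun wl :: "('v set \<Rightarrow> real) \<Rightarrow> 'v list \<Rightarrow> real" where
  "wl len (x#y#r) = len {x,y} + wl len (y#r)" | "wl len _ = 0"
fun eds :: "'v list \<Rightarrow> 'v set set" where
  "eds (x#y#r) = insert {x,y} (eds (y#r))" | "eds _ = {}"
fun chn :: "'v set set \<Rightarrow> 'v list \<Rightarrow> bool" where
  "chn E (x#y#r) = ({x,y}\<in>E \<and> chn E (y#r))" | "chn E _ = True"

lemma walk_chn: "walk E xs \<longleftrightarrow> xs \<noteq> [] \<and> chn E xs"
proof (induction E xs rule: chn.induct)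
  case (1 E x y r)
  then show ?case unfolding walk_def by (auto simp: All_less_Suc2)
qed (auto simp: walk_def)

lemma walk_len_wl: "walk_len len xs = wl len xs"
proof (induction len xs rule: wl.induct)
  case (1 len x y r)
  have "walk_len len (x#y#r) = (\<Sum>i<Suc (length r). len {(x#y#r) ! i, (x#y#r) ! Suc i})"
    unfolding walk_len_def by simp
  also have "\<dots> = len {x,y} + (\<Sum>i<length r. len {(y#r) ! i, (y#r) ! Suc i})"
    by (subst sum.lessThan_Suc_shift) simp
  also have "(\<Sum>i<length r. len {(y#r) ! i, (y#r) ! Suc i}) = walk_len len (y#r)"
    unfolding walk_len_def by simp
  finally show ?case using 1 by simp
qed (auto simp: walk_len_def)

lemma chn_append: "chn E (xs @ ys) \<longleftrightarrow> chn E xs \<and> chn E ys \<and> (xs \<noteq> [] \<and> ys \<noteq> [] \<longrightarrow> {last xs, hd ys} \<in> E)"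
proof (induction xs)
  case (Cons x xs) then show ?case by (cases xs; cases ys) auto
qed simp

lemma wl_append: "wl len (xs @ ys) = wl len xs + wl len ys + (if xs \<noteq> [] \<and> ys \<noteq> [] then len {last xs, hd ys} else 0)"
proof (induction xs)
  case (Cons x xs) then show ?case by (cases xs; cases ys) auto
qed simp

lemma eds_append: "eds (xs @ ys) = eds xs \<union> eds ys \<union> (if xs \<noteq> [] \<and> ys \<noteq> [] then {{last xs, hd ys}} else {})"
proof (induction xs)
  case (Cons x xs) then show ?case by (cases xs; cases ys) auto
qed simp

lemma chn_rev: "chn E (rev xs) = chn E xs"
  by (induction xs rule: chn.induct) (auto simp: chn_append insert_commute)

lemma wl_rev: "wl len (rev xs) = wl len xs"
  by (induction xs rule: induct_list012) (auto simp: wl_append insert_commute)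

lemma eds_rev: "eds (rev xs) = eds xs"
  by (induction xs rule: eds.induct) (auto simp: eds_append insert_commute)

lemma eds_sub_set: "e \<in> eds xs \<Longrightarrow> e \<subseteq> set xs"
  by (induction xs rule: eds.induct) auto

lemma eds_decomp: "e \<in> eds xs \<Longrightarrow> \<exists>pre x y post. xs = pre @ x # y # post \<and> e = {x,y}"
proof (induction xs rule: eds.induct)
  case (1 x y r)
  show ?case
  proof (cases "e = {x,y}")
    case True then show ?thesis by (metis append_Nil)
  next
    case False
    with 1 obtain pre a b post where "y#r = pre @ a # b # post" "e = {a,b}" by auto
    then show ?thesis by (metis append_Cons)
  qed
qed auto

locale T =
  fixes V :: "'v set" and E :: "'v set set" and len :: "'v set \<Rightarrow> real"
  assumes tree: "is_tree V E len"
begin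

abbreviation D where "D \<equiv> dV E len"

lemma finV: "finite V" and nonemptyV: "V \<noteq> {}"
  and edgeE: "e \<in> E \<Longrightarrow> \<exists>u v. e = {u, v} \<and> u \<in> V \<and> v \<in> V \<and> u \<noteq> v"
  and lenpos: "e \<in> E \<Longrightarrow> len e > 0"
  and conn: "u \<in> V \<Longrightarrow> v \<in> V \<Longrightarrow> \<exists>xs. walk E xs \<and> hd xs = u \<and> last xs = v"
  and acyc: "\<not> is_cycle E xs"
  using tree unfolding is_tree_def by blast+

lemma edge_V: "{a,b} \<in> E \<Longrightarrow> a \<in> V \<and> b \<in> V \<and> a \<noteq> b"
  using edgeE[of "{a,b}"] by (auto simp: doubleton_eq_iff)

lemma chn_V: "chn E xs \<Longrightarrow> hd xs \<in> V \<Longrightarrow> set xs \<subseteq> V"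
  by (induction xs rule: induct_list012) (auto dest: edge_V)

lemma wl_nonneg: "chn E xs \<Longrightarrow> wl len xs \<ge> 0"
  by (induction xs rule: induct_list012) (auto dest!: lenpos)

lemma shortcut:
  assumes "chn E xs" "xs \<noteq> []"
  shows "\<exists>ys. chn E ys \<and> distinct ys \<and> ys \<noteq> [] \<and> hd ys = hd xs \<and> last ys = last xs
     \<and> wl len ys \<le> wl len xs \<and> eds ys \<subseteq> eds xs"
  using assms
proof (induction xs)
  case (Cons x xs)
  show ?case
  proof (cases xs)
    case Nil then show ?thesis by (intro exI[of _ "[x]"]) auto
  next
    case (Cons y r)
    with Cons.prems have ch: "chn E xs" "{x,y} \<in> E" by auto
    with Cons.IH Cons obtain ys where ys: "chn E ys" "distinct ys" "ys \<noteq> []" "hd ys = y"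
      "last ys = last xs" "wl len ys \<le> wl len xs" "eds ys \<subseteq> eds xs" by auto
    show ?thesis
    proof (cases "x \<in> set ys")
      case False
      obtain r' where r': "ys = y # r'" using ys(3,4) by (cases ys) auto
      have "chn E (x # ys)" using ch ys r' by auto
      moreover have "wl len (x # ys) \<le> wl len (x # xs)" using ys r' Cons by auto
      moreover have "eds (x # ys) \<subseteq> eds (x # xs)" using ys r' Cons by auto
      ultimately show ?thesis using False ys Cons by (intro exI[of _ "x # ys"]) auto
    next
      case True
      then obtain pre post where pp: "ys = pre @ x # post" by (meson split_list)
      have c: "chn E (x # post)" using ys(1) pp by (simp add: chn_append)
      have "wl len (x # post) \<le> wl len ys"
        using pp wl_append[of len pre "x # post"] wl_nonneg[of pre] ys(1)
        by (auto simp: chn_append dest!: lenpos split: if_splits)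
      moreover have "wl len xs \<le> wl len (x # xs)" using Cons ch lenpos[of "{x,y}"] by auto
      moreover have "eds (x # post) \<subseteq> eds ys" using pp by (auto simp: eds_append)
      moreover have "eds xs \<subseteq> eds (x # xs)" using Cons by auto
      moreover have "distinct (x # post)" using ys(2) pp by auto
      moreover have "last (x # post) = last ys" using pp by auto
      ultimately show ?thesis using c ys Cons by (intro exI[of _ "x # post"]) auto
    qed
  qed
qed simp

lemma no_alt_walk:
  assumes e: "{u,v} \<in> E" and c: "chn E xs" "xs \<noteq> []" "hd xs = u" "last xs = v"
    and av: "{u,v} \<notin> eds xs"
  shows False
proof -
  obtain ys where ys: "chn E ys" "distinct ys" "ys \<noteq> []" "hd ys = u" "last ys = v"
    "eds ys \<subseteq> eds xs" using shortcut[OF c(1,2)] c by auto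
  have uv: "u \<noteq> v" using edge_V[OF e] by auto
  have "length ys \<ge> 3"
  proof (rule ccontr)
    assume "\<not> 3 \<le> length ys"
    then consider "ys = [u]" | "ys = [u,v]" using ys(3,4,5)
      by (cases ys; cases "tl ys"; cases "tl (tl ys)") auto
    then show False using uv av ys by cases auto
  qed
  then have "is_cycle E ys" unfolding is_cycle_def using ys e
    by (auto simp: walk_chn insert_commute)
  then show False using acyc by blast
qed

definition W where "W a b = {xs. walk E xs \<and> hd xs = a \<and> last xs = b}"

lemma D_Inf: "D a b = Inf (wl len ` W a b)"
  unfolding dV_def W_def walk_len_wl by (rule arg_cong[where f=Inf]) auto

lemma W_nonneg: "xs \<in> W a b \<Longrightarrow> wl len xs \<ge> 0"
  unfolding W_def by (auto simp: walk_chn intro: wl_nonneg)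

lemma D_le: "xs \<in> W a b \<Longrightarrow> D a b \<le> wl len xs"
  unfolding D_Inf by (rule cInf_lower) (auto intro!: bdd_belowI[of _ 0] W_nonneg)

lemma D_attain:
  assumes "a \<in> V" "b \<in> V"
  shows "\<exists>xs \<in> W a b. wl len xs = D a b"
proof -
  define Wd where "Wd = {xs \<in> W a b. distinct xs}"
  have "Wd \<subseteq> {xs. set xs \<subseteq> V \<and> length xs \<le> card V}"
  proof
    fix xs assume "xs \<in> Wd"
    then have "walk E xs" "hd xs = a" "distinct xs" unfolding Wd_def W_def by auto
    then have "set xs \<subseteq> V" using chn_V assms by (auto simp: walk_chn)
    then show "xs \<in> {xs. set xs \<subseteq> V \<and> length xs \<le> card V}"
      using \<open>distinct xs\<close> finV by (auto simp: distinct_card[symmetric] intro: card_mono)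
  qed
  then have fin: "finite Wd" using finite_lists_length_le[OF finV] by (rule finite_subset)
  obtain xs0 where "walk E xs0" "hd xs0 = a" "last xs0 = b" using conn assms by blast
  then obtain ys where "chn E ys" "distinct ys" "ys \<noteq> []" "hd ys = a" "last ys = b"
    using shortcut[of xs0] by (auto simp: walk_chn)
  then have ne: "Wd \<noteq> {}" unfolding Wd_def W_def by (auto simp: walk_chn)
  define m where "m = Min (wl len ` Wd)"
  have "m \<in> wl len ` Wd" unfolding m_def using Min_in[of "wl len ` Wd"] fin ne by auto
  then obtain z where z: "z \<in> Wd" "wl len z = m" by auto
  have "D a b = m"
  proof (rule antisym)
    show "D a b \<le> m" using z D_le unfolding Wd_def by auto
    show "m \<le> D a b" unfolding D_Inf
    proof (rule cInf_greatest)
      show "wl len ` W a b \<noteq> {}" using z unfolding Wd_def by auto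
    next
      fix r assume "r \<in> wl len ` W a b"
      then obtain xs where xs: "xs \<in> W a b" "r = wl len xs" by auto
      then obtain ys where "chn E ys" "distinct ys" "ys \<noteq> []" "hd ys = a" "last ys = b"
        "wl len ys \<le> wl len xs" using shortcut[of xs] unfolding W_def by (auto simp: walk_chn)
      then have "ys \<in> Wd" unfolding Wd_def W_def by (auto simp: walk_chn)
      then have "m \<le> wl len ys" unfolding m_def using fin by auto
      then show "m \<le> r" using xs \<open>wl len ys \<le> wl len xs\<close> by auto
    qed
  qed
  then show ?thesis using z unfolding Wd_def by auto
qed

lemma D_nonneg: "a \<in> V \<Longrightarrow> b \<in> V \<Longrightarrow> D a b \<ge> 0"
  using D_attain W_nonneg by metis

lemma D_refl: "D a a = 0"
proof -
  have "[a] \<in> W a a" unfolding W_def walk_def by auto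
  then have "D a a \<le> 0" using D_le by fastforce
  moreover have "D a a \<ge> 0" unfolding D_Inf
    by (rule cInf_greatest) (use \<open>[a] \<in> W a a\<close> W_nonneg in auto)
  ultimately show ?thesis by simp
qed

lemma D_sym: "a \<in> V \<Longrightarrow> b \<in> V \<Longrightarrow> D a b = D b a"
proof -
  have *: "D a b \<le> D b a" if a: "a \<in> V" and b: "b \<in> V" for a b
  proof -
    obtain xs where "xs \<in> W b a" "wl len xs = D b a" using D_attain[OF b a] by blast
    then have "rev xs \<in> W a b" unfolding W_def
      by (auto simp: walk_chn chn_rev hd_rev last_rev)
    then show ?thesis using D_le wl_rev \<open>wl len xs = D b a\<close> by metis
  qed
  assume "a \<in> V" "b \<in> V" then show ?thesis using *[of a b] *[of b a] by auto
qed

lemma join: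
  assumes "xs \<in> W a b" "ys \<in> W b c"
  shows "xs @ tl ys \<in> W a c \<and> wl len (xs @ tl ys) = wl len xs + wl len ys
    \<and> eds (xs @ tl ys) = eds xs \<union> eds ys"
proof -
  obtain y r where ys: "ys = y # r" using assms(2) unfolding W_def walk_def by (cases ys) auto
  have y: "y = b" using assms(2) ys unfolding W_def by auto
  have xs: "xs \<noteq> []" "chn E xs" "hd xs = a" "last xs = b" using assms(1) unfolding W_def walk_chn by auto
  have cy: "chn E (y # r)" using assms(2) ys unfolding W_def walk_chn by auto
  show ?thesis
  proof (cases r)
    case Nil
    then show ?thesis using assms xs ys y unfolding W_def by auto
  next
    case (Cons z r')
    have "{b, z} \<in> E" using cy Cons y by auto
    then show ?thesis using assms xs ys y cy Cons unfolding W_def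
      by (auto simp: walk_chn chn_append wl_append eds_append)
  qed
qed

lemma D_tri: "a \<in> V \<Longrightarrow> b \<in> V \<Longrightarrow> c \<in> V \<Longrightarrow> D a c \<le> D a b + D b c"
  using D_attain[of a b] D_attain[of b c] join D_le by metis

lemma D_edge_le: "{a,b} \<in> E \<Longrightarrow> D a b \<le> len {a,b}"
proof -
  assume "{a,b} \<in> E"
  then have "[a,b] \<in> W a b" unfolding W_def by (auto simp: walk_chn)
  then show ?thesis using D_le by fastforce
qed

lemma split_vertex:
  assumes "xs \<in> W a b" "wl len xs = D a b" "xs = pre @ z # post" "a \<in> V"
  shows "D a b = D a z + D z b"
proof -
  have "chn E xs" "hd xs = a" using assms(1) unfolding W_def walk_chn by auto
  then have V: "set xs \<subseteq> V" using chn_V assms(4) by auto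
  have "chn E ((pre @ [z]) @ post)" using \<open>chn E xs\<close> assms(3) by simp
  then have "chn E (pre @ [z])" using chn_append by blast
  then have w1: "pre @ [z] \<in> W a z" using assms \<open>hd xs = a\<close> unfolding W_def walk_chn
    by (cases pre) auto
  have w2: "z # post \<in> W z b" using assms unfolding W_def walk_chn by (auto simp: chn_append)
  have "wl len xs = wl len (pre @ [z]) + wl len (z # post)"
    using assms(3) wl_append[of len pre "z # post"] wl_append[of len pre "[z]"] by auto
  then have "D a b \<ge> D a z + D z b" using D_le[OF w1] D_le[OF w2] assms by linarith
  moreover have "z \<in> V" using V assms(3) by auto
  moreover have "b \<in> V" proof -
    have "xs \<noteq> []" "last xs = b" using assms(1) unfolding W_def walk_def by auto
    then show ?thesis using V last_in_set by blast
  qed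
  moreover have "D a b \<le> D a z + D z b" using D_tri \<open>z \<in> V\<close> \<open>b \<in> V\<close> assms(4) by auto
  ultimately show ?thesis by linarith
qed

lemma split_edge:
  assumes "xs \<in> W a b" "wl len xs = D a b" "xs = pre @ x # y # post" "a \<in> V"
  shows "D a b = D a x + len {x,y} + D y b"
proof -
  have "chn E xs" "hd xs = a" using assms(1) unfolding W_def walk_chn by auto
  then have V: "set xs \<subseteq> V" using chn_V assms(4) by auto
  have e: "{x,y} \<in> E" using assms unfolding W_def walk_chn by (auto simp: chn_append)
  have "chn E ((pre @ [x]) @ y # post)" using \<open>chn E xs\<close> assms(3) by simp
  then have "chn E (pre @ [x])" using chn_append by blast
  then have w1: "pre @ [x] \<in> W a x" using assms \<open>hd xs = a\<close> unfolding W_def walk_chn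
    by (cases pre) auto
  have w2: "y # post \<in> W y b" using assms unfolding W_def walk_chn by (auto simp: chn_append)
  have "wl len xs = wl len (pre @ [x]) + len {x,y} + wl len (y # post)"
    using assms(3) wl_append[of len "pre @ [x]" "y # post"] by auto
  then have "D a b \<ge> D a x + len {x,y} + D y b" using D_le[OF w1] D_le[OF w2] assms by linarith
  moreover have "x \<in> V" "y \<in> V" using V assms(3) by auto
  moreover have "b \<in> V" proof -
    have "xs \<noteq> []" "last xs = b" using assms(1) unfolding W_def walk_def by auto
    then show ?thesis using V last_in_set by blast
  qed
  moreover have "D a b \<le> D a x + len {x,y} + D y b"
    using D_tri[of a x b] D_tri[of x y b] D_edge_le[OF e] \<open>x \<in> V\<close> \<open>y \<in> V\<close> \<open>b \<in> V\<close> assms(4) by auto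
  ultimately show ?thesis by linarith
qed

end

context T begin

lemma D_pos_edge_aux: "{u,v} \<in> E \<Longrightarrow> len {u,v} > 0" using lenpos by auto

lemma first_edge_of_shortest:
  assumes P: "P \<in> W u z" "wl len P = D u z" and u: "u \<in> V"
    and e: "{u,v} \<in> eds P"
  shows "D u z = len {u,v} + D v z"
proof -
  obtain pre x y post where d: "P = pre @ x # y # post" "{u,v} = {x,y}" using eds_decomp[OF e] by blast
  have sp: "D u z = D u x + len {x,y} + D y z" using split_edge[OF P d(1) u] .
  have "chn E (pre @ x # y # post)" using P d(1) unfolding W_def walk_chn by auto
  then have "chn E (x # y # post)" using chn_append by blast
  then have ev: "{u,v} \<in> E" using d(2) by simp
  have V: "u \<in> V" "v \<in> V" "u \<noteq> v" using edge_V[OF ev] by auto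
  have L: "len {u,v} > 0" using lenpos ev by auto
  have "chn E P" "hd P = u" "P \<noteq> []" "last P = z" using P unfolding W_def walk_chn by auto
  then have "set P \<subseteq> V" using chn_V u by auto
  then have zV: "z \<in> V" using \<open>P \<noteq> []\<close> \<open>last P = z\<close> last_in_set by blast
  from d(2) consider "x = u" "y = v" | "x = v" "y = u" by (auto simp: doubleton_eq_iff)
  then show ?thesis
  proof cases
    case 1 then show ?thesis using sp D_refl by simp
  next
    case 2
    have "D u z = D u v + len {u,v} + D u z" using sp 2 by (simp add: insert_commute)
    moreover have "D u v \<ge> 0" using D_nonneg V by auto
    ultimately show ?thesis using L by linarith
  qed
qed

lemma V2:
  assumes e: "{u,v} \<in> E" and z: "z \<in> V"
  shows "D u z = len {u,v} + D v z \<or> D v z = len {u,v} + D u z"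
proof -
  have V: "u \<in> V" "v \<in> V" using edge_V[OF e] by auto
  obtain P where P: "P \<in> W u z" "wl len P = D u z" using D_attain V z by blast
  obtain Q where Q: "Q \<in> W v z" "wl len Q = D v z" using D_attain V z by blast
  show ?thesis
  proof (cases "{u,v} \<in> eds P")
    case True then show ?thesis using first_edge_of_shortest[OF P V(1)] by auto
  next
    case F1: False
    show ?thesis
    proof (cases "{v,u} \<in> eds Q")
      case True then show ?thesis using first_edge_of_shortest[OF Q V(2)] by (auto simp: insert_commute)
    next
      case False
      have "rev Q \<in> W z v" using Q unfolding W_def by (auto simp: walk_chn chn_rev hd_rev last_rev)
      from join[OF P(1) this] have j: "P @ tl (rev Q) \<in> W u v" "eds (P @ tl (rev Q)) = eds P \<union> eds Q"
        by (auto simp: eds_rev)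
      show ?thesis
        using no_alt_walk[OF e, of "P @ tl (rev Q)"] j F1 False unfolding W_def walk_chn
        by (auto simp: insert_commute)
    qed
  qed
qed

lemma D_edge: "{u,v} \<in> E \<Longrightarrow> D u v = len {u,v}"
  using V2[of u v v] D_refl edge_V[of u v] D_nonneg[of u v] lenpos[of "{u,v}"] by force

end

context T begin

definition asd where "asd a b z \<longleftrightarrow> D b z = len {a,b} + D a z"

lemma ba: "{b,a} = {a,b}" by auto

lemma asd_cases: "{a,b} \<in> E \<Longrightarrow> z \<in> V \<Longrightarrow> asd a b z \<or> asd b a z"
  using V2[of a b z] unfolding asd_def ba[of b a] by linarith

lemma asd_excl: "{a,b} \<in> E \<Longrightarrow> z \<in> V \<Longrightarrow> asd a b z \<Longrightarrow> \<not> asd b a z"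
  unfolding asd_def ba[of b a] using lenpos[of "{a,b}"] by linarith

lemma vertex_on_shortest:
  assumes "P \<in> W a b" "wl len P = D a b" "z \<in> set P" "a \<in> V"
  shows "D a b = D a z + D z b"
proof -
  obtain pre post where "P = pre @ z # post" using assms(3) by (meson split_list)
  then show ?thesis using split_vertex[OF assms(1,2) _ assms(4)] by blast
qed

lemma same_side:
  assumes ab: "{a,b} \<in> E" and xy: "{x,y} \<in> E" and ne: "{x,y} \<noteq> {a,b}" and ax: "asd a b x"
  shows "asd a b y"
proof (rule ccontr)
  assume nay: "\<not> asd a b y"
  have V: "a \<in> V" "b \<in> V" "x \<in> V" "y \<in> V" "a \<noteq> b" using edge_V ab xy by auto
  define L where "L = len {a,b}"
  define L' where "L' = len {x,y}"
  have L: "L > 0" "L' > 0" using lenpos ab xy unfolding L_def L'_def by auto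
  have "asd b a y" using asd_cases[OF ab V(4)] nay by blast
  then have by_: "D a y = L + D b y" unfolding asd_def L_def by (simp add: insert_commute)
  have bx: "D b x = L + D a x" using ax unfolding asd_def L_def .
  have s1: "D x a = L' + D y a \<or> D y a = L' + D x a" using V2[OF xy V(1)] unfolding L'_def .
  have s2: "D x b = L' + D y b \<or> D y b = L' + D x b" using V2[OF xy V(2)] unfolding L'_def .
  have sym: "D x a = D a x" "D y a = D a y" "D x b = D b x" "D y b = D b y"
    using D_sym V by auto
  have AB: "D a x = D b y" using s1 s2 unfolding sym using by_ bx L by (elim disjE) linarith+
  obtain P where P: "P \<in> W a x" "wl len P = D a x" using D_attain V by blast
  obtain Q where Q: "Q \<in> W y b" "wl len Q = D y b" using D_attain V by blast
  have xyW: "[x,y] \<in> W x y" using xy unfolding W_def by (auto simp: walk_chn)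
  have nP: "{a,b} \<notin> eds P"
  proof
    assume "{a,b} \<in> eds P"
    then have "b \<in> set P" using eds_sub_set by blast
    then have "D a x = D a b + D b x" using vertex_on_shortest P V by blast
    then show False using bx D_edge[OF ab] L unfolding L_def by (simp add: D_nonneg V)
  qed
  have nQ: "{a,b} \<notin> eds Q"
  proof
    assume "{a,b} \<in> eds Q"
    then have "a \<in> set Q" using eds_sub_set by blast
    then have "D y b = D y a + D a b" using vertex_on_shortest Q V by blast
    then show False using by_ sym D_edge[OF ab] L unfolding L_def by simp
  qed
  have j1: "P @ tl [x,y] \<in> W a y" "eds (P @ tl [x,y]) = eds P \<union> {{x,y}}" using join[OF P(1) xyW] by auto
  have j2: "(P @ tl [x,y]) @ tl Q \<in> W a b" "eds ((P @ tl [x,y]) @ tl Q) = eds P \<union> {{x,y}} \<union> eds Q"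
    using join[OF j1(1) Q(1)] j1(2) by auto
  define R where "R = (P @ tl [x,y]) @ tl Q"
  have R: "chn E R" "R \<noteq> []" "hd R = a" "last R = b" using j2(1) unfolding R_def W_def walk_chn by auto
  have "{a,b} \<notin> eds R" using j2(2) nP nQ ne unfolding R_def by blast
  then show False using no_alt_walk[OF ab R] by blast
qed

lemma chn_same_side:
  assumes ab: "{a,b} \<in> E"
  shows "chn E xs \<Longrightarrow> xs \<noteq> [] \<Longrightarrow> {a,b} \<notin> eds xs \<Longrightarrow> asd a b (hd xs) \<Longrightarrow> asd a b (last xs)"
proof (induction xs)
  case (Cons x xs)
  show ?case
  proof (cases xs)
    case Nil then show ?thesis using Cons.prems by simp
  next
    case (Cons y zs)
    have e: "{x,y} \<in> E" "{x,y} \<noteq> {a,b}" using Cons.prems Cons by auto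
    have "asd a b y" using same_side[OF ab e] Cons.prems by simp
    moreover have "chn E xs" "{a,b} \<notin> eds xs" using Cons.prems Cons by auto
    ultimately have "asd a b (last xs)" using Cons.IH Cons by simp
    then show ?thesis using Cons by simp
  qed
qed simp

lemma crossing:
  assumes ab: "{a,b} \<in> E" and c: "chn E xs" "xs \<noteq> []" and hV: "hd xs \<in> V"
    and h: "asd a b (hd xs)" and l: "asd b a (last xs)"
  shows "{a,b} \<in> eds xs"
proof (rule ccontr)
  assume "{a,b} \<notin> eds xs"
  then have "asd a b (last xs)" using chn_same_side ab c h by blast
  moreover have "last xs \<in> V" using chn_V[OF c(1) hV] last_in_set[OF c(2)] by blast
  moreover have "{b,a} \<in> E" using ab by (simp add: insert_commute)
  ultimately show False using asd_excl l by blast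
qed

lemma L3:
  assumes ab: "{a,b} \<in> E" and pq: "p \<in> V" "q \<in> V" and ap: "asd a b p" and bq: "asd b a q"
  shows "D p q = D p a + len {a,b} + D b q"
proof -
  have V: "a \<in> V" "b \<in> V" using edge_V ab by auto
  obtain P where P: "P \<in> W p q" "wl len P = D p q" using D_attain pq by blast
  have c: "chn E P" "P \<noteq> []" "hd P = p" "last P = q" using P(1) unfolding W_def walk_chn by auto
  have "{a,b} \<in> eds P" using crossing[OF ab c(1,2)] c pq ap bq by simp
  then obtain pre x y post where d: "P = pre @ x # y # post" "{a,b} = {x,y}" using eds_decomp by blast
  have sp: "D p q = D p x + len {x,y} + D y q" using split_edge[OF P d(1) pq(1)] .
  from d(2) consider "x = a" "y = b" | "x = b" "y = a" by (auto simp: doubleton_eq_iff)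
  then show ?thesis
  proof cases
    case 1 then show ?thesis using sp by simp
  next
    case 2
    have e1: "D p b = len {a,b} + D p a" using ap D_sym V pq unfolding asd_def by simp
    have e2: "D a q = len {a,b} + D b q" using bq D_sym V pq unfolding asd_def ba[of b a] by simp
    have "D p q = D p b + len {a,b} + D a q" using sp 2 by (simp add: ba)
    moreover have "D p q \<le> D p a + D a b + D b q" using D_tri[of p a q] D_tri[of a b q] V pq by linarith
    moreover have "len {a,b} > 0" using lenpos ab by auto
    ultimately show ?thesis using e1 e2 D_edge[OF ab] by linarith
  qed
qed

lemma direction:
  assumes c: "c \<in> V" and p: "p \<in> V" and ne: "c \<noteq> p"
  shows "\<exists>c'. {c,c'} \<in> E \<and> D c p = len {c,c'} + D c' p"
proof -
  obtain P where P: "P \<in> W c p" "wl len P = D c p" using D_attain c p by blast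
  have h: "P \<noteq> []" "hd P = c" "last P = p" "chn E P" using P(1) unfolding W_def walk_chn by auto
  obtain r0 where "P = c # r0" using h by (cases P) auto
  then obtain c' r where Pc: "P = c # c' # r" using h ne by (cases r0) auto
  have "P = [] @ c # c' # r" using Pc by simp
  from split_edge[OF P(1) P(2) this c] have "D c p = D c c + len {c,c'} + D c' p" .
  moreover have "{c,c'} \<in> E" using h(4) Pc by simp
  ultimately show ?thesis using D_refl[of c] by (intro exI[of _ c']) simp
qed

lemma has_edge: "E \<noteq> {} \<Longrightarrow> c \<in> V \<Longrightarrow> \<exists>c'. {c,c'} \<in> E"
proof -
  assume "E \<noteq> {}" "c \<in> V"
  then obtain e where "e \<in> E" by auto
  then obtain u v where "e = {u,v}" "u \<in> V" "v \<in> V" "u \<noteq> v" using edgeE by blast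
  then obtain p where "p \<in> V" "c \<noteq> p" by (cases "c = u") auto
  from direction[OF \<open>c \<in> V\<close> this] show ?thesis by blast
qed

lemma single_vertex: "E = {} \<Longrightarrow> c \<in> V \<Longrightarrow> V = {c}"
proof -
  assume E: "E = {}" and c: "c \<in> V"
  have "u = c" if u: "u \<in> V" for u
  proof -
    obtain xs where "walk E xs" "hd xs = u" "last xs = c" using conn u c by blast
    then have w: "xs \<noteq> []" "chn E xs" "hd xs = u" "last xs = c" by (auto simp: walk_chn)
    then obtain x r where xr: "xs = x # r" by (cases xs) auto
    have "r = []"
    proof (cases r)
      case (Cons y r')
      then have "{x,y} \<in> E" using w(2) xr by simp
      then show ?thesis using E by simp
    qed
    then show ?thesis using w xr by simp
  qed
  then show ?thesis using c by blast
qed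

end

context T begin

abbreviation dT where "dT \<equiv> dist_T E len"
abbreviation dP where "dP \<equiv> dPV E len"

lemma dP_vpt: "dP (vpt c) a = D c a" by (simp add: dPV_def vpt_def seglen_def)
lemma dT_vpt: "dT (vpt c) q = dP q c" by (cases q) (simp add: dist_T_def vpt_def seglen_def Let_def)
lemma dP_edge: "u \<noteq> v \<Longrightarrow> dP (u,v,t) a = min (t + D u a) (len {u,v} - t + D v a)"
  by (simp add: dPV_def seglen_def)
lemma dT_edge: "a \<noteq> b \<Longrightarrow> dT (a,b,s) (u,v,t) = (let via = min (s + dP (u,v,t) a) (len {a,b} - s + dP (u,v,t) b) in
   if {a,b} = {u,v} then min via (if a = u then \<bar>s - t\<bar> else \<bar>s - (len {a,b} - t)\<bar>) else via)"
  by (simp add: dist_T_def seglen_def Let_def)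

lemma pts_cases:
  assumes "q \<in> pts V E len"
  obtains c where "c \<in> V" "q = vpt c"
  | u v t where "q = (u,v,t)" "{u,v} \<in> E" "0 \<le> t" "t \<le> len {u,v}"
  using assms unfolding pts_def by auto

definition th where "th a b q = (dP q a - dP q b + len {a,b}) / 2"
definition rh where "rh a b q = (dP q a + dP q b - len {a,b}) / 2"

lemma th_rh_a: "dP q a = th a b q + rh a b q" unfolding th_def rh_def by (simp add: field_simps)
lemma th_rh_b: "dP q b = len {a,b} - th a b q + rh a b q" unfolding th_def rh_def by (simp add: field_simps)

lemma EF:
  assumes ab: "{a,b} \<in> E" and q: "q \<in> pts V E len"
  shows "0 \<le> th a b q \<and> th a b q \<le> len {a,b} \<and> 0 \<le> rh a b q \<and>
    (\<forall>s. 0 \<le> s \<longrightarrow> s \<le> len {a,b} \<longrightarrow> dT (a,b,s) q = \<bar>s - th a b q\<bar> + rh a b q)"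
proof -
  define L where "L = len {a,b}"
  have abV: "a \<in> V" "b \<in> V" "a \<noteq> b" using edge_V ab by auto
  have L: "L > 0" using lenpos ab unfolding L_def by auto
  have Lba: "len {b,a} = L" unfolding L_def by (simp add: ba)
  show ?thesis using q
  proof (cases rule: pts_cases)
    case (1 c)
    have da: "dP q a = D c a" and db: "dP q b = D c b" using 1 dP_vpt by auto
    have sa: "D c a = D a c" "D c b = D b c" using D_sym abV 1 by auto
    have nn: "D c a \<ge> 0" "D c b \<ge> 0" using D_nonneg abV 1 by auto
    have dt: "dT (a,b,s) q = min (s + D c a) (L - s + D c b)" for s
    proof -
      have "{a,b} \<noteq> {c,c}" using abV by auto
      then have "dT (a,b,s) (c,c,0) = min (s + D c a) (L - s + D c b)"
        using abV(3) unfolding dT_edge[OF abV(3)] dP_vpt[unfolded vpt_def] L_def Let_def by auto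
      then show ?thesis using 1 unfolding vpt_def by simp
    qed
    from asd_cases[OF ab 1(1)] show ?thesis
    proof
      assume "asd a b c"
      then have e: "D c b = L + D c a" unfolding asd_def L_def using sa by simp
      have "th a b q = 0" "rh a b q = D c a" unfolding th_def rh_def da db e L_def by simp_all
      then show ?thesis using dt e nn L unfolding L_def by (auto simp: min_def)
    next
      assume "asd b a c"
      then have e: "D c a = L + D c b" unfolding asd_def Lba using sa by simp
      have "th a b q = L" "rh a b q = D c b" unfolding th_def rh_def da db e L_def by simp_all
      then show ?thesis using dt e nn L unfolding L_def by (auto simp: min_def)
    qed
  next
    case (2 u v t)
    note q2 = 2
    have uvV: "u \<in> V" "v \<in> V" "u \<noteq> v" using edge_V 2 by auto
    define L' where "L' = len {u,v}"
    have dpa: "dP q x = min (t + D u x) (L' - t + D v x)" for x using 2 uvV dP_edge L'_def by simp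
    have dtq: "dT (a,b,s) q = (let via = min (s + dP q a) (L - s + dP q b) in
      if {a,b} = {u,v} then min via (if a = u then \<bar>s - t\<bar> else \<bar>s - (L - t)\<bar>) else via)" for s
      using 2(1) dT_edge[OF abV(3)] unfolding L_def by simp
    show ?thesis
    proof (cases "{a,b} = {u,v}")
      case True
      then consider "u = a" "v = b" | "u = b" "v = a" by (auto simp: doubleton_eq_iff)
      then show ?thesis
      proof cases
        case 1
        have L'L: "L' = L" unfolding L'_def L_def using 1 by simp
        have "dP q a = t" "dP q b = L - t" using dpa[of a] dpa[of b] 1 D_refl D_edge[OF ab] D_sym abV 2 L'L
          unfolding L_def by (auto simp: min_def)
        then have th: "th a b q = t" "rh a b q = 0" unfolding th_def rh_def L_def by simp_all
        have "dT (a,b,s) q = \<bar>s - t\<bar>" if "0 \<le> s" "s \<le> L" for s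
          using that 1 2 abV \<open>dP q a = t\<close> \<open>dP q b = L - t\<close> dtq[of s] L'L unfolding L_def L'_def
          by (auto simp: Let_def min_def)
        then show ?thesis using th 2 1 unfolding L_def by auto
      next
        case 2
        have L'L: "L' = L" unfolding L'_def L_def using 2 by (simp add: ba)
        have "dP q a = L - t" "dP q b = t" using dpa[of a] dpa[of b] 2 q2 D_refl D_edge[OF ab] D_sym abV L'L
          unfolding L_def by (auto simp: min_def ba)
        then have th: "th a b q = L - t" "rh a b q = 0" unfolding th_def rh_def L_def by simp_all
        have tL: "0 \<le> t" "t \<le> L" using q2 L'L unfolding L'_def by auto
        have "dT (a,b,s) q = \<bar>s - (L - t)\<bar>" if "0 \<le> s" "s \<le> L" for s
          using that 2 abV tL \<open>dP q a = L - t\<close> \<open>dP q b = t\<close> dtq[of s]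
          by (auto simp: Let_def min_def ba)
        then show ?thesis using th tL unfolding L_def by auto
      qed
    next
      case False
      have dt: "dT (a,b,s) q = min (s + dP q a) (L - s + dP q b)" for s
        using dtq[of s] False by (simp add: Let_def)
      have nn: "dP q a \<ge> 0" "dP q b \<ge> 0" using dpa[of a] dpa[of b] D_nonneg uvV abV 2
        unfolding L'_def by (auto simp: min_def)
      have ne: "{u,v} \<noteq> {a,b}" using False by auto
      have ne': "{u,v} \<noteq> {b,a}" using False by (auto simp: ba)
      have ab': "{b,a} \<in> E" using ab by (simp add: ba)
      from asd_cases[OF ab uvV(1)] show ?thesis
      proof
        assume au: "asd a b u"
        then have av: "asd a b v" using same_side[OF ab 2(2) ne] by simp
        have "D u b = L + D u a" "D v b = L + D v a" using au av D_sym abV uvV unfolding asd_def L_def by auto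
        then have e: "dP q b = L + dP q a" using dpa[of a] dpa[of b] by (auto simp: min_def)
        have "th a b q = 0" "rh a b q = dP q a" unfolding th_def rh_def e L_def by simp_all
        then show ?thesis using dt e nn L unfolding L_def by (auto simp: min_def)
      next
        assume au: "asd b a u"
        then have av: "asd b a v" using same_side[OF ab' 2(2) ne'] by simp
        have "D u a = L + D u b" "D v a = L + D v b" using au av D_sym abV uvV unfolding asd_def Lba by auto
        then have e: "dP q a = L + dP q b" using dpa[of a] dpa[of b] by (auto simp: min_def)
        have "th a b q = L" "rh a b q = dP q b" unfolding th_def rh_def e L_def by simp_all
        then show ?thesis using dt e nn L unfolding L_def by (auto simp: min_def)
      qed
    qed
  qed
qed

lemma th_vpt:
  assumes ab: "{a,b} \<in> E" and c: "c \<in> V"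
  shows "(asd a b c \<and> th a b (vpt c) = 0 \<and> rh a b (vpt c) = D c a)
       \<or> (asd b a c \<and> th a b (vpt c) = len {a,b} \<and> rh a b (vpt c) = D c b)"
proof -
  have abV: "a \<in> V" "b \<in> V" using edge_V ab by auto
  have sa: "D c a = D a c" "D c b = D b c" using D_sym abV c by auto
  from asd_cases[OF ab c] show ?thesis
  proof
    assume h: "asd a b c"
    then have "D c b = len {a,b} + D c a" using sa unfolding asd_def by simp
    then show ?thesis using h unfolding th_def rh_def dP_vpt by simp
  next
    assume h: "asd b a c"
    then have "D c a = len {a,b} + D c b" using sa unfolding asd_def by (simp add: ba)
    then show ?thesis using h unfolding th_def rh_def dP_vpt by simp
  qed
qed

lemma th_rev: "th b a q = len {a,b} - th a b q" "rh b a q = rh a b q"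
  unfolding th_def rh_def by (simp_all add: ba field_simps)

lemma dT_vpt_a: "dT (vpt a) q = th a b q + rh a b q" using dT_vpt th_rh_a by simp
lemma dT_vpt_b: "dT (vpt b) q = len {a,b} - th a b q + rh a b q" using dT_vpt th_rh_b by simp

definition eqv where "eqv x y \<longleftrightarrow> (\<forall>q\<in>pts V E len. dT x q = dT y q)"

lemma eqv_refl: "eqv x x" and eqv_sym: "eqv x y \<Longrightarrow> eqv y x"
  and eqv_trans: "eqv x y \<Longrightarrow> eqv y z \<Longrightarrow> eqv x z"
  unfolding eqv_def by auto

lemma eqv_0: "{a,b} \<in> E \<Longrightarrow> eqv (a,b,0) (vpt a)"
  unfolding eqv_def using EF dT_vpt_a[of a _ b] lenpos[of "{a,b}"] by fastforce

lemma eqv_L: "{a,b} \<in> E \<Longrightarrow> eqv (a,b,len {a,b}) (vpt b)"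
  unfolding eqv_def using EF dT_vpt_b[of b _ a] by fastforce

lemma eqv_rev:
  assumes ab: "{a,b} \<in> E" and s: "0 \<le> s" "s \<le> len {a,b}"
  shows "eqv (a,b,s) (b,a,len {a,b} - s)"
  unfolding eqv_def
proof
  fix q assume q: "q \<in> pts V E len"
  have ab': "{b,a} \<in> E" using ab by (simp add: ba)
  have "dT (a,b,s) q = \<bar>s - th a b q\<bar> + rh a b q" using EF[OF ab q] s by auto
  moreover have "dT (b,a,len {a,b} - s) q = \<bar>len {a,b} - s - th b a q\<bar> + rh b a q"
    using EF[OF ab' q] s by (auto simp: ba)
  moreover have "th b a q = len {a,b} - th a b q" "rh b a q = rh a b q" by (rule th_rev)+
  ultimately show "dT (a,b,s) q = dT (b,a,len {a,b} - s) q" by simp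
qed

lemma dP_tri:
  assumes q: "q \<in> pts V E len" and aV: "a \<in> V" and pV: "p \<in> V"
  shows "dT (vpt a) q \<le> dT (vpt p) q + D p a"
  using q
proof (cases rule: pts_cases)
  case (1 c)
  then show ?thesis using D_tri[of c p a] aV pV by (simp add: dT_vpt dP_vpt)
next
  case (2 u v t)
  have uvV: "u \<in> V" "v \<in> V" "u \<noteq> v" using edge_V 2 by auto
  show ?thesis using 2 uvV D_tri[of u p a] D_tri[of v p a] aV pV
    by (simp add: dT_vpt dP_edge min_def)
qed

lemma sep:
  assumes ab: "{a,b} \<in> E" and p: "p \<in> V" and bp: "asd b a p" and q: "q \<in> pts V E len"
    and lt: "th a b q < len {a,b}"
  shows "dT (vpt p) q = D a p - th a b q + rh a b q"
proof -
  define L where "L = len {a,b}"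
  have abV: "a \<in> V" "b \<in> V" "a \<noteq> b" using edge_V ab by auto
  have L: "L > 0" using lenpos ab unfolding L_def by auto
  have pa: "D a p = L + D b p" using bp unfolding asd_def L_def by (simp add: ba)
  have sp: "D p a = D a p" "D p b = D b p" using D_sym abV p by auto
  show ?thesis using q
  proof (cases rule: pts_cases)
    case (1 c)
    from th_vpt[OF ab 1(1)] lt have ac: "asd a b c" "th a b q = 0" "rh a b q = D c a"
      using 1 unfolding L_def by auto
    have "D c p = D c a + L + D b p" using L3[OF ab 1(1) p ac(1) bp] unfolding L_def .
    then show ?thesis using ac 1 pa by (simp add: dT_vpt dP_vpt)
  next
    case (2 u v t)
    note q2 = 2
    have uvV: "u \<in> V" "v \<in> V" "u \<noteq> v" using edge_V 2 by auto
    define L' where "L' = len {u,v}"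
    have dpa: "dP q x = min (t + D u x) (L' - t + D v x)" for x using 2 uvV dP_edge L'_def by simp
    show ?thesis
    proof (cases "{a,b} = {u,v}")
      case True
      then consider "u = a" "v = b" | "u = b" "v = a" by (auto simp: doubleton_eq_iff)
      then show ?thesis
      proof cases
        case 1
        have L'L: "L' = L" unfolding L'_def L_def using 1 by simp
        have "dP q a = t" "dP q b = L - t" using dpa[of a] dpa[of b] 1 q2 D_refl D_edge[OF ab] D_sym abV L'L
          unfolding L_def by (auto simp: min_def)
        moreover have "dP q p = L - t + D b p" using dpa[of p] 1 q2 pa L'L by (auto simp: min_def)
        ultimately show ?thesis unfolding th_def rh_def L_def dT_vpt using pa unfolding L_def by (simp add: field_simps)
      next
        case 2
        have L'L: "L' = L" unfolding L'_def L_def using 2 by (simp add: ba)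
        have "dP q a = L - t" "dP q b = t" using dpa[of a] dpa[of b] 2 q2 D_refl D_edge[OF ab] D_sym abV L'L
          unfolding L_def by (auto simp: min_def ba)
        moreover have "dP q p = t + D b p" using dpa[of p] 2 q2 pa L'L L_def by (auto simp: min_def ba)
        ultimately show ?thesis unfolding th_def rh_def L_def dT_vpt using pa unfolding L_def by (simp add: field_simps)
      qed
    next
      case False
      have ne: "{u,v} \<noteq> {a,b}" using False by auto
      have "asd a b u"
      proof (rule ccontr)
        assume "\<not> asd a b u"
        then have au: "asd b a u" using asd_cases[OF ab uvV(1)] by auto
        have ab': "{b,a} \<in> E" using ab by (simp add: ba)
        have av: "asd b a v" using same_side[OF ab' 2(2) _ au] ne by (auto simp: ba)
        have "D u a = L + D u b" "D v a = L + D v b" using au av D_sym abV uvV unfolding asd_def L_def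
          by (auto simp: ba)
        then have e: "dP q a = L + dP q b" using dpa[of a] dpa[of b] by (auto simp: min_def)
        then have "th a b q = L" unfolding th_def L_def by simp
        then show False using lt unfolding L_def by simp
      qed
      then have av: "asd a b v" using same_side[OF ab 2(2) ne] by simp
      have "D u b = L + D u a" "D v b = L + D v a" using \<open>asd a b u\<close> av D_sym abV uvV unfolding asd_def L_def by auto
      then have e: "dP q b = L + dP q a" using dpa[of a] dpa[of b] by (auto simp: min_def)
      have "D u p = D u a + L + D b p" using L3[OF ab uvV(1) p \<open>asd a b u\<close> bp] unfolding L_def .
      moreover have "D v p = D v a + L + D b p" using L3[OF ab uvV(2) p av bp] unfolding L_def .
      ultimately have "dP q p = dP q a + D a p" using dpa[of a] dpa[of p] pa by (auto simp: min_def)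
      then show ?thesis unfolding th_def rh_def e dT_vpt L_def by simp
    qed
  qed
qed

lemma onpath:
  assumes ab: "{a,b} \<in> E" and t0: "0 \<le> t0" "t0 \<le> len {a,b}" and p1: "p1 \<in> V" and pj: "pj \<in> V"
    and b1: "asd b a p1" and aj: "asd a b pj"
  shows "on_path E len (vpt p1) (vpt pj) (a,b,t0)"
proof -
  define L where "L = len {a,b}"
  have abV: "a \<in> V" "b \<in> V" "a \<noteq> b" using edge_V ab by auto
  have pa: "D a p1 = L + D b p1" using b1 unfolding asd_def L_def by (simp add: ba)
  have "dT (vpt p1) (a,b,t0) = L - t0 + D b p1"
    using pa t0 abV unfolding dT_vpt L_def by (simp add: dP_edge min_def)
  moreover have "dT (a,b,t0) (vpt pj) = t0 + D pj a"
  proof -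
    have q: "vpt pj \<in> pts V E len" using pj unfolding pts_def by auto
    have "th a b (vpt pj) = 0" "rh a b (vpt pj) = D pj a"
      using th_vpt[OF ab pj] aj asd_excl[OF ab pj] by auto
    then show ?thesis using EF[OF ab q] t0 by auto
  qed
  moreover have "dT (vpt p1) (vpt pj) = D pj a + L + D b p1"
    using L3[OF ab pj p1 aj b1] unfolding dT_vpt dP_vpt L_def .
  ultimately show ?thesis unfolding on_path_def by simp
qed

lemma move_vertex:
  assumes c: "c \<in> V" and p: "p \<in> V" and ne: "c \<noteq> p"
  shows "\<exists>a b t0. {a,b} \<in> E \<and> 0 \<le> t0 \<and> t0 < len {a,b} \<and> eqv (vpt c) (a,b,t0) \<and> asd b a p"
proof -
  obtain c' where c': "{c,c'} \<in> E" "D c p = len {c,c'} + D c' p" using direction[OF c p ne] by blast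
  have "asd c' c p" using c'(2) unfolding asd_def by (simp add: ba)
  moreover have "eqv (vpt c) (c,c',0)" using eqv_0[OF c'(1)] eqv_sym by blast
  ultimately show ?thesis using c'(1) lenpos[OF c'(1)] by blast
qed

lemma move:
  assumes x: "x \<in> pts V E len" and p: "p \<in> V" and ne: "\<not> eqv x (vpt p)"
  shows "\<exists>a b t0. {a,b} \<in> E \<and> 0 \<le> t0 \<and> t0 < len {a,b} \<and> eqv x (a,b,t0) \<and> asd b a p"
  using x
proof (cases rule: pts_cases)
  case (1 c)
  then have "c \<noteq> p" using ne eqv_refl[of "vpt p"] by auto
  then show ?thesis using move_vertex[OF 1(1) p] 1 by auto
next
  case (2 u v t)
  note q2 = 2
  have uvV: "u \<in> V" "v \<in> V" using edge_V 2 by auto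
  have vu: "{v,u} \<in> E" using 2 by (simp add: ba)
  from th_vpt[OF 2(2) p] consider "asd u v p" | "asd v u p" by blast
  then show ?thesis
  proof cases
    case 1
    show ?thesis
    proof (cases "t = 0")
      case True
      then have e: "eqv x (vpt u)" using eqv_0[OF 2(2)] 2 by simp
      then have "u \<noteq> p" using ne by auto
      from move_vertex[OF uvV(1) p this] show ?thesis using e eqv_trans by blast
    next
      case False
      have "eqv x (v,u,len {u,v} - t)" using eqv_rev[OF 2(2)] 2 by simp
      moreover have "len {u,v} - t < len {v,u}" using False 2 by (simp add: ba)
      moreover have "0 \<le> len {u,v} - t" using 2 by simp
      ultimately show ?thesis using vu 1
        by (intro exI[of _ v] exI[of _ u] exI[of _ "len {u,v} - t"]) (auto simp: ba)
    qed
  next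
    case 2
    note a2 = 2
    show ?thesis
    proof (cases "t = len {u,v}")
      case True
      then have e: "eqv x (vpt v)" using eqv_L[OF q2(2)] q2 by simp
      then have "v \<noteq> p" using ne by auto
      from move_vertex[OF uvV(2) p this] show ?thesis using e eqv_trans by blast
    next
      case False
      then show ?thesis using q2 a2 eqv_refl by force
    qed
  qed
qed

end


lemma ev_pos: "(0::real) < c \<Longrightarrow> eventually (\<lambda>s. 0 < s \<and> s < c) (at_right 0)"
  using eventually_at_right_real[of 0 c] by (rule eventually_mono) auto

lemma ev_ex: "eventually P (at_right (0::real)) \<Longrightarrow> \<exists>s. P s"
  using eventually_happens'[of "at_right (0::real)" P] by simp

locale U = T V E len for V :: "'v set" and E and len +
  fixes n :: nat and w :: "nat \<Rightarrow> real" and m :: "nat \<Rightarrow> nat"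
    and loc :: "nat \<Rightarrow> nat \<Rightarrow> 'v point" and f :: "nat \<Rightarrow> nat \<Rightarrow> real"
    and pstar :: "nat \<Rightarrow> 'v"
  assumes w: "\<And>i. i \<in> {1..n} \<Longrightarrow> w i \<ge> 0"
    and loc: "\<And>i j. i \<in> {1..n} \<Longrightarrow> j < m i \<Longrightarrow> loc i j \<in> pts V E len"
    and fnn: "\<And>i j. i \<in> {1..n} \<Longrightarrow> j < m i \<Longrightarrow> f i j \<ge> 0"
    and fsum: "\<And>i. i \<in> {1..n} \<Longrightarrow> (\<Sum>j < m i. f i j) = 1"
    and med_vertex: "\<And>i. i \<in> {1..n} \<Longrightarrow> pstar i \<in> V"
    and med_min: "\<And>i x. i \<in> {1..n} \<Longrightarrow> x \<in> pts V E len \<Longrightarrow>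
        Ed E len w m loc f (vpt (pstar i)) i \<le> Ed E len w m loc f x i"
begin

abbreviation g where "g i x \<equiv> Ed E len w m loc f x i"
definition h where "h I x = Max ((\<lambda>i. g i x) ` I)"

lemma g_eqv: "eqv x y \<Longrightarrow> i \<in> {1..n} \<Longrightarrow> g i x = g i y"
  unfolding Ed_def eqv_def using loc by (auto intro!: sum.cong)

lemma g_lip:
  assumes ab: "{a,b} \<in> E" and i: "i \<in> {1..n}" and t: "0 \<le> t0" "0 \<le> s" "t0 + s \<le> len {a,b}"
  shows "g i (a,b,t0+s) \<le> g i (a,b,t0) + s * w i"
proof -
  have "(\<Sum>j<m i. f i j * dT (a,b,t0+s) (loc i j)) \<le> (\<Sum>j<m i. f i j * dT (a,b,t0) (loc i j) + f i j * s)"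
  proof (rule sum_mono)
    fix j assume j: "j \<in> {..<m i}"
    have q: "loc i j \<in> pts V E len" using loc i j by auto
    have "dT (a,b,t0+s) (loc i j) \<le> dT (a,b,t0) (loc i j) + s" using EF[OF ab q] t by auto
    then show "f i j * dT (a,b,t0+s) (loc i j) \<le> f i j * dT (a,b,t0) (loc i j) + f i j * s"
      using fnn[OF i] j by (simp add: mult_left_mono distrib_left[symmetric])
  qed
  also have "\<dots> = (\<Sum>j<m i. f i j * dT (a,b,t0) (loc i j)) + s"
    using fsum[OF i] by (simp add: sum.distrib sum_distrib_right[symmetric])
  finally have "w i * (\<Sum>j<m i. f i j * dT (a,b,t0+s) (loc i j)) \<le> w i * ((\<Sum>j<m i. f i j * dT (a,b,t0) (loc i j)) + s)"
    using w[OF i] by (rule mult_left_mono)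
  then show ?thesis unfolding Ed_def by (simp add: algebra_simps)
qed

lemma key_q:
  assumes ab: "{a,b} \<in> E" and p: "p \<in> V" and bp: "asd b a p" and q: "q \<in> pts V E len"
    and t: "0 \<le> t0" "0 < s" "t0 + s \<le> len {a,b}" and c: "th a b q > t0 \<longrightarrow> s \<le> th a b q - t0"
  shows "(D a p - t0) * (dT (a,b,t0+s) q - dT (a,b,t0) q) \<le> s * (dT (vpt p) q - dT (a,b,t0) q)"
proof -
  have abV: "a \<in> V" "b \<in> V" using edge_V ab by auto
  note ef = EF[OF ab q]
  have y: "dT (a,b,t0+s) q = \<bar>t0 + s - th a b q\<bar> + rh a b q" using ef t by auto
  have x0: "dT (a,b,t0) q = \<bar>t0 - th a b q\<bar> + rh a b q" using ef t by auto
  show ?thesis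
  proof (cases "th a b q \<le> t0")
    case True
    then have "th a b q < len {a,b}" using t by auto
    from sep[OF ab p bp q this] have "dT (vpt p) q = D a p - th a b q + rh a b q" .
    then have d2: "dT (vpt p) q - dT (a,b,t0) q = D a p - t0" using x0 True by auto
    have d1: "dT (a,b,t0+s) q - dT (a,b,t0) q = s" using y x0 True t by auto
    show ?thesis unfolding d1 d2 by (simp add: mult.commute)
  next
    case False
    have d: "dT (a,b,t0+s) q - dT (a,b,t0) q = - s" using y x0 False c by auto
    have "dT (vpt a) q \<le> dT (vpt p) q + D p a" using dP_tri[OF q abV(1) p] .
    moreover have "dT (vpt a) q = th a b q + rh a b q" using dT_vpt_a .
    moreover have "D p a = D a p" using D_sym abV p by auto
    ultimately have "dT (vpt p) q - dT (a,b,t0) q \<ge> t0 - D a p" using x0 False by auto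
    then have "s * (dT (vpt p) q - dT (a,b,t0) q) \<ge> s * (t0 - D a p)" using t by (simp add: mult_left_mono)
    then show ?thesis unfolding d by (simp add: algebra_simps)
  qed
qed

lemma sum_lin: "(\<Sum>j\<in>A. F j * (c * (X j - Y j))) = c * ((\<Sum>j\<in>A. F j * X j) - (\<Sum>j\<in>A. F j * Y j))"
  for F X Y :: "nat \<Rightarrow> real"
  by (simp add: sum_distrib_left sum_subtractf[symmetric] algebra_simps)

lemma g_key:
  assumes i: "i \<in> {1..n}" and ab: "{a,b} \<in> E" and p: "p \<in> V" and bp: "asd b a p"
    and t: "0 \<le> t0" "0 < s" "t0 + s \<le> len {a,b}"
    and c: "\<forall>j<m i. th a b (loc i j) > t0 \<longrightarrow> s \<le> th a b (loc i j) - t0"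
  shows "(D a p - t0) * (g i (a,b,t0+s) - g i (a,b,t0)) \<le> s * (g i (vpt p) - g i (a,b,t0))"
proof -
  define \<delta> where "\<delta> = D a p - t0"
  have "(\<Sum>j<m i. f i j * (\<delta> * (dT (a,b,t0+s) (loc i j) - dT (a,b,t0) (loc i j))))
     \<le> (\<Sum>j<m i. f i j * (s * (dT (vpt p) (loc i j) - dT (a,b,t0) (loc i j))))"
  proof (rule sum_mono)
    fix j assume j: "j \<in> {..<m i}"
    have "\<delta> * (dT (a,b,t0+s) (loc i j) - dT (a,b,t0) (loc i j)) \<le> s * (dT (vpt p) (loc i j) - dT (a,b,t0) (loc i j))"
      unfolding \<delta>_def using key_q[OF ab p bp loc[OF i] t] c j by auto
    then show "f i j * (\<delta> * (dT (a,b,t0+s) (loc i j) - dT (a,b,t0) (loc i j))) \<le> f i j * (s * (dT (vpt p) (loc i j) - dT (a,b,t0) (loc i j)))"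
      using fnn[OF i] j by (simp add: mult_left_mono)
  qed
  then have "w i * (\<delta> * ((\<Sum>j<m i. f i j * dT (a,b,t0+s) (loc i j)) - (\<Sum>j<m i. f i j * dT (a,b,t0) (loc i j))))
     \<le> w i * (s * ((\<Sum>j<m i. f i j * dT (vpt p) (loc i j)) - (\<Sum>j<m i. f i j * dT (a,b,t0) (loc i j))))"
    unfolding sum_lin using w[OF i] by (rule mult_left_mono)
  then show ?thesis unfolding Ed_def \<delta>_def by (simp add: algebra_simps)
qed

lemma core:
  assumes I: "I \<subseteq> {1..n}" "I \<noteq> {}" and x: "x \<in> pts V E len" and xmin: "\<forall>y\<in>pts V E len. h I x \<le> h I y"
  shows "(\<exists>i\<in>I. h I x = g i (vpt (pstar i)))
    \<or> (\<exists>i\<in>I. \<exists>j\<in>I. \<exists>c\<in>pts V E len. on_path E len (vpt (pstar i)) (vpt (pstar j)) c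
          \<and> g i c = g j c \<and> h I x = g i c)"
proof (rule ccontr)
  assume nc: "\<not> ?thesis"
  define H where "H = h I x"
  have finI: "finite I" using I(1) finite_subset by blast
  have "H \<in> (\<lambda>i. g i x) ` I" unfolding H_def h_def using Max_in finI I(2) by auto
  then obtain i1 where i1: "i1 \<in> I" "g i1 x = H" by auto
  have le: "g i x \<le> H" if "i \<in> I" for i unfolding H_def h_def using finI that by auto
  have ma: "g i (vpt (pstar i)) < H" if "i \<in> I" "g i x = H" for i
  proof -
    have "i \<in> {1..n}" using that I(1) by auto
    then have "g i (vpt (pstar i)) \<le> g i x" using med_min x by blast
    moreover have "h I x \<noteq> g i (vpt (pstar i))" using nc that by blast
    ultimately show ?thesis using that unfolding H_def by auto
  qed
  define p1 where "p1 = pstar i1"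
  have i1n: "i1 \<in> {1..n}" using i1 I by auto
  have p1V: "p1 \<in> V" using med_vertex i1n unfolding p1_def by auto
  have "\<not> eqv x (vpt p1)"
  proof
    assume "eqv x (vpt p1)"
    then have "g i1 x = g i1 (vpt p1)" using g_eqv i1n by blast
    then show False using ma[OF i1] i1 unfolding p1_def by auto
  qed
  then obtain a b t0 where mv: "{a,b} \<in> E" "0 \<le> t0" "t0 < len {a,b}" "eqv x (a,b,t0)" "asd b a p1"
    using move[OF x p1V] by blast
  define L where "L = len {a,b}"
  have x0: "(a,b,t0) \<in> pts V E len" using mv unfolding pts_def by auto
  have gx0: "g i (a,b,t0) = g i x" if "i \<in> I" for i using g_eqv[OF mv(4)] that I by auto
  have allb: "asd b a (pstar j)" if j: "j \<in> I" "g j x = H" for j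
  proof (rule ccontr)
    assume "\<not> asd b a (pstar j)"
    moreover have pjV: "pstar j \<in> V" using med_vertex j I by auto
    ultimately have aj: "asd a b (pstar j)" using asd_cases[OF mv(1)] by blast
    have "on_path E len (vpt p1) (vpt (pstar j)) (a,b,t0)"
      using onpath[OF mv(1) mv(2) _ p1V pjV mv(5) aj] mv(3) by simp
    moreover have "g i1 (a,b,t0) = g j (a,b,t0)" "H = g i1 (a,b,t0)" using gx0 i1 j by auto
    ultimately show False using nc i1(1) j(1) x0 unfolding p1_def H_def by blast
  qed
  have ev: "eventually (\<lambda>s. g i (a,b,t0+s) < H) (at_right 0)" if i: "i \<in> I" for i
  proof (cases "g i x < H")
    case True
    have inn: "i \<in> {1..n}" using i I by auto
    define c where "c = min (L - t0) ((H - g i x) / (w i + 1))"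
    have wi: "w i \<ge> 0" using w inn by auto
    have c0: "c > 0" unfolding c_def using True mv(3) wi unfolding L_def by auto
    show ?thesis
      using ev_pos[OF c0]
    proof (rule eventually_mono)
      fix s assume s: "0 < s \<and> s < c"
      then have sL: "t0 + s \<le> len {a,b}" unfolding c_def L_def by auto
      have "g i (a,b,t0+s) \<le> g i (a,b,t0) + s * w i" using g_lip[OF mv(1) inn mv(2) _ sL] s by auto
      also have "\<dots> \<le> g i x + s * (w i + 1)" using gx0[OF i] s by (simp add: algebra_simps)
      also have "s * (w i + 1) < H - g i x"
      proof -
        have "s < (H - g i x) / (w i + 1)" using s unfolding c_def by auto
        then show ?thesis using wi by (simp add: field_simps)
      qed
      finally show "g i (a,b,t0+s) < H" by simp
    qed
  next
    case False
    then have gH: "g i x = H" using le[OF i] by auto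
    have inn: "i \<in> {1..n}" using i I by auto
    define p where "p = pstar i"
    have pV: "p \<in> V" using med_vertex inn unfolding p_def by auto
    have bp: "asd b a p" using allb[OF i gH] unfolding p_def .
    have \<delta>: "D a p - t0 > 0"
    proof -
      have "D a p = len {a,b} + D b p" using bp unfolding asd_def by (simp add: ba)
      moreover have "D b p \<ge> 0" using D_nonneg pV edge_V[OF mv(1)] by auto
      ultimately show ?thesis using mv(3) by auto
    qed
    have evj: "eventually (\<lambda>s. th a b (loc i j) > t0 \<longrightarrow> s \<le> th a b (loc i j) - t0) (at_right 0)" for j
    proof (cases "th a b (loc i j) > t0")
      case True
      then have "0 < th a b (loc i j) - t0" by simp
      from ev_pos[OF this] show ?thesis by (rule eventually_mono) auto
    qed simp
    have "eventually (\<lambda>s. \<forall>j\<in>{..<m i}. th a b (loc i j) > t0 \<longrightarrow> s \<le> th a b (loc i j) - t0) (at_right 0)"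
      using evj by (simp add: eventually_ball_finite)
    moreover have "eventually (\<lambda>s. 0 < s \<and> s < L - t0) (at_right 0)" using ev_pos mv(3) unfolding L_def by simp
    ultimately show ?thesis
    proof (rule eventually_elim2)
      fix s assume cj: "\<forall>j\<in>{..<m i}. th a b (loc i j) > t0 \<longrightarrow> s \<le> th a b (loc i j) - t0"
        and s: "0 < s \<and> s < L - t0"
      have "(D a p - t0) * (g i (a,b,t0+s) - g i (a,b,t0)) \<le> s * (g i (vpt p) - g i (a,b,t0))"
        using g_key[OF inn mv(1) pV bp mv(2)] s cj unfolding L_def by auto
      moreover have "g i (vpt p) - g i (a,b,t0) < 0" using ma[OF i gH] gx0[OF i] gH unfolding p_def by auto
      ultimately have "(D a p - t0) * (g i (a,b,t0+s) - g i (a,b,t0)) < 0" using s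
        by (meson le_less_trans mult_pos_neg)
      then have "g i (a,b,t0+s) - g i (a,b,t0) < 0" using \<delta> by (simp add: mult_less_0_iff)
      then show "g i (a,b,t0+s) < H" using gx0[OF i] gH by auto
    qed
  qed
  have "eventually (\<lambda>s. \<forall>i\<in>I. g i (a,b,t0+s) < H) (at_right 0)"
    using ev finI by (simp add: eventually_ball_finite)
  moreover have "eventually (\<lambda>s. 0 < s \<and> s < L - t0) (at_right 0)" using ev_pos mv(3) unfolding L_def by simp
  ultimately have "eventually (\<lambda>s. (\<forall>i\<in>I. g i (a,b,t0+s) < H) \<and> 0 < s \<and> s < L - t0) (at_right 0)"
    by (rule eventually_conj)
  then obtain s where s: "\<forall>i\<in>I. g i (a,b,t0+s) < H" "0 < s" "s < L - t0" using ev_ex by blast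
  have y: "(a,b,t0+s) \<in> pts V E len" using s mv unfolding pts_def L_def by auto
  have "h I (a,b,t0+s) < H" unfolding h_def using s(1) finI I(2) by simp
  moreover have "h I x \<le> h I (a,b,t0+s)" using xmin y by blast
  ultimately show False unfolding H_def by simp
qed

lemma h_eqv:
  assumes "eqv x y" "I \<subseteq> {1..n}" shows "h I x = h I y"
proof -
  have "g i x = g i y" if "i \<in> I" for i using g_eqv[OF assms(1)] that assms(2) by blast
  then have "(\<lambda>i. g i x) ` I = (\<lambda>i. g i y) ` I" by (intro image_cong refl)
  then show ?thesis unfolding h_def by simp
qed

lemma cont_Max:
  fixes G :: "nat \<Rightarrow> real \<Rightarrow> real"
  assumes "finite I" "I \<noteq> {}" "\<And>i. i \<in> I \<Longrightarrow> continuous_on S (G i)"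
  shows "continuous_on S (\<lambda>s. Max ((\<lambda>i. G i s) ` I))"
  using assms
proof (induction I rule: finite_ne_induct)
  case (singleton x) then show ?case by simp
next
  case (insert x F)
  have "continuous_on S (\<lambda>s. max (G x s) (Max ((\<lambda>i. G i s) ` F)))"
    using insert by (intro continuous_on_max) auto
  moreover have "Max ((\<lambda>i. G i s) ` insert x F) = max (G x s) (Max ((\<lambda>i. G i s) ` F))" for s
    using insert by simp
  ultimately show ?case by simp
qed

lemma h_edge_cont:
  assumes ab: "{a,b} \<in> E" and I: "I \<subseteq> {1..n}" "I \<noteq> {}"
  shows "continuous_on {0..len {a,b}} (\<lambda>s. h I (a,b,s))"
proof -
  have finI: "finite I" using I(1) finite_subset by blast
  define G where "G i s = w i * (\<Sum>j<m i. f i j * (\<bar>s - th a b (loc i j)\<bar> + rh a b (loc i j)))" for i s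
  have c: "continuous_on {0..len {a,b}} (\<lambda>s. Max ((\<lambda>i. G i s) ` I))"
    by (rule cont_Max[OF finI I(2)]) (auto simp: G_def intro!: continuous_intros)
  have "h I (a,b,s) = Max ((\<lambda>i. G i s) ` I)" if s: "s \<in> {0..len {a,b}}" for s
  proof -
    have "g i (a,b,s) = G i s" if i: "i \<in> I" for i
    proof -
      have inn: "i \<in> {1..n}" using i I by auto
      show ?thesis unfolding Ed_def G_def using EF[OF ab loc[OF inn]] s by (auto intro!: sum.cong)
    qed
    then show ?thesis unfolding h_def by (auto intro!: arg_cong[where f=Max] image_cong)
  qed
  then show ?thesis using c continuous_on_cong by (metis (no_types, lifting))
qed

lemma exists_min:
  assumes I: "I \<subseteq> {1..n}" "I \<noteq> {}"
  shows "\<exists>x\<in>pts V E len. \<forall>y\<in>pts V E len. h I x \<le> h I y"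
proof (cases "E = {}")
  case True
  obtain c where c: "c \<in> V" using nonemptyV by auto
  have "V = {c}" using single_vertex[OF True c] .
  then have "pts V E len = {vpt c}" unfolding pts_def using True by auto
  then show ?thesis by auto
next
  case False
  define OP where "OP = {(a,b). {a,b} \<in> E}"
  have "OP \<subseteq> V \<times> V" unfolding OP_def using edge_V by auto
  then have finOP: "finite OP" using finV finite_subset by blast
  obtain e where "e \<in> E" using False by auto
  then obtain u v where "{u,v} \<in> E" using edgeE by blast
  then have neOP: "OP \<noteq> {}" unfolding OP_def by auto
  have ex: "\<exists>s\<in>{0..len {a,b}}. \<forall>t\<in>{0..len {a,b}}. h I (a,b,s) \<le> h I (a,b,t)" if "(a,b) \<in> OP" for a b
  proof -
    have ab: "{a,b} \<in> E" using that unfolding OP_def by auto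
    have "{0..len {a,b}} \<noteq> {}" using lenpos[OF ab] by auto
    then show ?thesis using continuous_attains_inf[OF compact_Icc _ h_edge_cont[OF ab I]] by blast
  qed
  define sel where "sel a b = (SOME s. s \<in> {0..len {a,b}} \<and> (\<forall>t\<in>{0..len {a,b}}. h I (a,b,s) \<le> h I (a,b,t)))" for a b
  have sel: "sel a b \<in> {0..len {a,b}} \<and> (\<forall>t\<in>{0..len {a,b}}. h I (a,b,sel a b) \<le> h I (a,b,t))"
    if "(a,b) \<in> OP" for a b
    unfolding sel_def using someI_ex[OF ex[OF that, unfolded Bex_def]] .
  define S' where "S' = (\<lambda>(a,b). (a,b,sel a b)) ` OP"
  have finS: "finite S'" "S' \<noteq> {}" unfolding S'_def using finOP neOP by auto
  have S'pts: "S' \<subseteq> pts V E len"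
  proof
    fix z assume "z \<in> S'"
    then obtain a b where ab: "(a,b) \<in> OP" "z = (a,b,sel a b)" unfolding S'_def by auto
    then show "z \<in> pts V E len" using sel[OF ab(1)] unfolding pts_def OP_def by auto
  qed
  have "Min (h I ` S') \<in> h I ` S'" using finS by auto
  then obtain x where x: "x \<in> S'" "h I x = Min (h I ` S')" by auto
  have low: "h I x \<le> h I (a,b,t)" if "{a,b} \<in> E" "0 \<le> t" "t \<le> len {a,b}" for a b t
  proof -
    have ab: "(a,b) \<in> OP" using that unfolding OP_def by auto
    have "(a,b,sel a b) \<in> S'" unfolding S'_def using ab by force
    then have "h I x \<le> h I (a,b,sel a b)" unfolding x(2) using finS(1) by simp
    also have "\<dots> \<le> h I (a,b,t)" using sel[OF ab] that by auto
    finally show ?thesis .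
  qed
  have "\<forall>y\<in>pts V E len. h I x \<le> h I y"
  proof
    fix y assume "y \<in> pts V E len"
    then show "h I x \<le> h I y"
    proof (cases rule: pts_cases)
      case (1 c)
      obtain c' where c': "{c,c'} \<in> E" using has_edge[OF False 1(1)] by blast
      have "h I (vpt c) = h I (c,c',0)" using h_eqv[OF eqv_0[OF c'] I(1)] by simp
      then show ?thesis using low[OF c'] lenpos[OF c'] 1 by auto
    next
      case (2 u v t)
      then show ?thesis using low by auto
    qed
  qed
  moreover have "x \<in> pts V E len" using x(1) S'pts by blast
  ultimately show ?thesis by blast
qed

definition xm where "xm I = (SOME x. x \<in> pts V E len \<and> (\<forall>y\<in>pts V E len. h I x \<le> h I y))"

lemma xm: "I \<subseteq> {1..n} \<Longrightarrow> I \<noteq> {} \<Longrightarrow> xm I \<in> pts V E len \<and> (\<forall>y\<in>pts V E len. h I (xm I) \<le> h I y)"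
  unfolding xm_def using someI_ex[OF exists_min[unfolded Bex_def]] by blast

definition Hv where "Hv I = h I (xm I)"

abbreviation kc where "kc C \<equiv> kcost E len n w m loc f C"

lemma reduce_C:
  assumes n: "n \<ge> 1" and C: "C \<subseteq> pts V E len" "C \<noteq> {}" "finite C" "card C \<le> k"
  shows "\<exists>I. I \<subseteq> {1..n} \<and> I \<noteq> {} \<and> Hv I \<le> kc C \<and>
     (\<exists>C'. C' \<subseteq> pts V E len \<and> C' \<noteq> {} \<and> finite C' \<and> card C' \<le> k \<and> kc C' \<le> Hv I)"
proof -
  have ex\<sigma>: "\<exists>c. c \<in> C \<and> g i c = Min ((\<lambda>c. g i c) ` C)" for i
  proof -
    have "Min ((\<lambda>c. g i c) ` C) \<in> (\<lambda>c. g i c) ` C" using C by auto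
    then obtain c where "c \<in> C" "Min ((\<lambda>c. g i c) ` C) = g i c" by blast
    then show ?thesis by (intro exI[of _ c]) simp
  qed
  define \<sigma> where "\<sigma> i = (SOME c. c \<in> C \<and> g i c = Min ((\<lambda>c. g i c) ` C))" for i
  have \<sigma>: "\<sigma> i \<in> C" "g i (\<sigma> i) = Min ((\<lambda>c. g i c) ` C)" for i
    unfolding \<sigma>_def using someI_ex[OF ex\<sigma>[of i]] by auto
  define Grp where "Grp c = {i \<in> {1..n}. \<sigma> i = c}" for c
  have Grp: "i \<in> Grp (\<sigma> i)" "Grp (\<sigma> i) \<subseteq> {1..n}" "Grp (\<sigma> i) \<noteq> {}" if "i \<in> {1..n}" for i
    using that unfolding Grp_def by auto
  have finN: "finite {1..n}" "{1..n} \<noteq> {}" using n by auto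
  have le_kc: "g i c \<le> kc C" if "i \<in> {1..n}" "c \<in> C" "g i c = Min ((\<lambda>c. g i c) ` C)" for i c
    unfolding kcost_def using that finN by (auto intro!: Max_ge_iff[THEN iffD2])
  have Hv_le: "Hv (Grp (\<sigma> i)) \<le> kc C" if i: "i \<in> {1..n}" for i
  proof -
    have "Hv (Grp (\<sigma> i)) \<le> h (Grp (\<sigma> i)) (\<sigma> i)"
      unfolding Hv_def using xm[OF Grp(2,3)[OF i]] \<sigma>(1) C(1) by blast
    also have "\<dots> \<le> kc C"
    proof -
      have "finite (Grp (\<sigma> i))" using Grp(2)[OF i] finite_subset by blast
      moreover have "\<forall>l\<in>Grp (\<sigma> i). g l (\<sigma> i) \<le> kc C"
        using le_kc \<sigma> unfolding Grp_def by fastforce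
      ultimately show ?thesis unfolding h_def using Grp(3)[OF i] by simp
    qed
    finally show ?thesis .
  qed
  define wC where "wC = Max ((\<lambda>i. Hv (Grp (\<sigma> i))) ` {1..n})"
  have "wC \<in> (\<lambda>i. Hv (Grp (\<sigma> i))) ` {1..n}" unfolding wC_def using finN by auto
  then obtain i0 where i0: "i0 \<in> {1..n}" "wC = Hv (Grp (\<sigma> i0))" by auto
  define C' where "C' = (\<lambda>c. xm (Grp c)) ` (\<sigma> ` {1..n})"
  have C'pts: "C' \<subseteq> pts V E len" unfolding C'_def using xm Grp by fastforce
  have C'ne: "C' \<noteq> {}" "finite C'" unfolding C'_def using finN by auto
  have "card C' \<le> card (\<sigma> ` {1..n})" unfolding C'_def by (rule card_image_le) (simp add: finN)
  also have "\<dots> \<le> card C" using \<sigma>(1) C(3) by (intro card_mono) auto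
  finally have C'card: "card C' \<le> k" using C(4) by simp
  have "kc C' \<le> wC"
    unfolding kcost_def
  proof (subst Max_le_iff)
    show "finite ((\<lambda>i. Min ((\<lambda>c. g i c) ` C')) ` {1..n})" using finN by simp
    show "(\<lambda>i. Min ((\<lambda>c. g i c) ` C')) ` {1..n} \<noteq> {}" using finN by simp
    show "\<forall>a\<in>(\<lambda>i. Min ((\<lambda>c. g i c) ` C')) ` {1..n}. a \<le> wC"
    proof
      fix a assume "a \<in> (\<lambda>i. Min ((\<lambda>c. g i c) ` C')) ` {1..n}"
      then obtain i where i: "i \<in> {1..n}" "a = Min ((\<lambda>c. g i c) ` C')" by auto
      have mem: "xm (Grp (\<sigma> i)) \<in> C'" unfolding C'_def using i by auto
      have "a \<le> g i (xm (Grp (\<sigma> i)))" unfolding i(2) using C'ne mem by auto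
      also have "\<dots> \<le> h (Grp (\<sigma> i)) (xm (Grp (\<sigma> i)))"
      proof -
        have "finite (Grp (\<sigma> i))" using Grp(2)[OF i(1)] finite_subset by blast
        then show ?thesis unfolding h_def using Grp(1)[OF i(1)] by auto
      qed
      also have "\<dots> = Hv (Grp (\<sigma> i))" unfolding Hv_def ..
      also have "\<dots> \<le> wC" unfolding wC_def using finN i by auto
      finally show "a \<le> wC" .
    qed
  qed
  then show ?thesis using Hv_le[OF i0(1)] i0 Grp[OF i0(1)] C'pts C'ne C'card
    by (intro exI[of _ "Grp (\<sigma> i0)"]) blast
qed

lemma lambda_eq:
  assumes n: "n \<ge> 1" and k: "k \<ge> 1"
  shows "\<exists>I. I \<subseteq> {1..n} \<and> I \<noteq> {} \<and> lambda_opt V E len k n w m loc f = Hv I"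
proof -
  define A where "A = {C. C \<subseteq> pts V E len \<and> C \<noteq> {} \<and> finite C \<and> card C \<le> k}"
  define Ws where "Ws = {v. \<exists>I. I \<subseteq> {1..n} \<and> I \<noteq> {} \<and> v = Hv I \<and> (\<exists>C'\<in>A. kc C' \<le> v)}"
  have "Ws \<subseteq> Hv ` Pow {1..n}" unfolding Ws_def by auto
  then have finW: "finite Ws" using finite_subset by blast
  obtain c where c: "c \<in> V" using nonemptyV by auto
  have "vpt c \<in> pts V E len" unfolding pts_def by (rule UnI2) (rule imageI[OF c])
  then have A0: "{vpt c} \<in> A" unfolding A_def using k by simp
  have claim: "\<exists>v\<in>Ws. v \<le> kc C" if CA: "C \<in> A" for C
  proof -
    have C: "C \<subseteq> pts V E len" "C \<noteq> {}" "finite C" "card C \<le> k" using CA unfolding A_def by auto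
    obtain I C' where I: "I \<subseteq> {1..n}" "I \<noteq> {}" "Hv I \<le> kc C"
      and C': "C' \<subseteq> pts V E len" "C' \<noteq> {}" "finite C'" "card C' \<le> k" "kc C' \<le> Hv I"
      using reduce_C[OF n C] by blast
    have "C' \<in> A" using C' unfolding A_def by blast
    then have "Hv I \<in> Ws" unfolding Ws_def using I C'(5) by blast
    then show ?thesis using I(3) by blast
  qed
  have neW: "Ws \<noteq> {}" using claim[OF A0] by auto
  define w0 where "w0 = Min Ws"
  have w0W: "w0 \<in> Ws" unfolding w0_def using finW neW by auto
  have lo: "w0 \<le> kc C" if "C \<in> A" for C
    using claim[OF that] finW unfolding w0_def by (meson Min_le order_trans)
  obtain C' where C': "C' \<in> A" "kc C' \<le> w0" using w0W unfolding Ws_def by blast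
  have lam: "lambda_opt V E len k n w m loc f = Inf (kc ` A)" unfolding lambda_opt_def A_def by simp
  have "Inf (kc ` A) = w0"
  proof (rule antisym)
    have "Inf (kc ` A) \<le> kc C'" by (rule cInf_lower) (use C' lo in \<open>auto intro!: bdd_belowI[of _ w0]\<close>)
    then show "Inf (kc ` A) \<le> w0" using C' by simp
    show "w0 \<le> Inf (kc ` A)" by (rule cInf_greatest) (use A0 lo in auto)
  qed
  then show ?thesis using w0W lam unfolding Ws_def by auto
qed

end
theorem mainTheorem7:
  fixes V :: "'v set" and E :: "'v set set" and len :: "'v set \<Rightarrow> real"
    and k n :: nat and w :: "nat \<Rightarrow> real" and m :: "nat \<Rightarrow> nat"
    and loc :: "nat \<Rightarrow> nat \<Rightarrow> 'v point" and f :: "nat \<Rightarrow> nat \<Rightarrow> real"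
    and pstar :: "nat \<Rightarrow> 'v"
  assumes tree: "is_tree V E len"
    and k: "k \<ge> 1" and n: "n \<ge> 1"
    and w: "\<And>i. i \<in> {1..n} \<Longrightarrow> w i \<ge> 0"
    and loc: "\<And>i j. i \<in> {1..n} \<Longrightarrow> j < m i \<Longrightarrow> loc i j \<in> pts V E len"
    and fnn: "\<And>i j. i \<in> {1..n} \<Longrightarrow> j < m i \<Longrightarrow> f i j \<ge> 0"
    and fsum: "\<And>i. i \<in> {1..n} \<Longrightarrow> (\<Sum>j < m i. f i j) = 1"
    and med_vertex: "\<And>i. i \<in> {1..n} \<Longrightarrow> pstar i \<in> V"
    and med_min: "\<And>i x. i \<in> {1..n} \<Longrightarrow> x \<in> pts V E len \<Longrightarrow>
        Ed E len w m loc f (vpt (pstar i)) i \<le> Ed E len w m loc f x i"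
  shows "(\<exists>i\<in>{1..n}. lambda_opt V E len k n w m loc f = Ed E len w m loc f (vpt (pstar i)) i)
       \<or> (\<exists>i\<in>{1..n}. \<exists>j\<in>{1..n}. \<exists>c\<in>pts V E len.
            on_path E len (vpt (pstar i)) (vpt (pstar j)) c
            \<and> Ed E len w m loc f c i = Ed E len w m loc f c j
            \<and> lambda_opt V E len k n w m loc f = Ed E len w m loc f c i)"
proof -
  interpret U V E len n w m loc f pstar
    by unfold_locales (use tree w loc fnn fsum med_vertex med_min in auto)
  obtain I where I: "I \<subseteq> {1..n}" "I \<noteq> {}" "lambda_opt V E len k n w m loc f = Hv I"
    using lambda_eq[OF n k] by blast
  have x: "xm I \<in> pts V E len" "\<forall>y\<in>pts V E len. h I (xm I) \<le> h I y" using xm[OF I(1,2)] by auto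
  have lam: "lambda_opt V E len k n w m loc f = h I (xm I)" using I(3) unfolding Hv_def .
  from core[OF I(1,2) x] show ?thesis unfolding lam[symmetric] using I(1) by blast
qed

end
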